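(* Let $E$ be a finite-dimensional real inner product space and $C(t)=\bigcap_{i=1}^k\{x\in E:(x,n_i)_0\le c_i(t)\}$ with $n_i\in E$ and globally Lipschitz continuous functions $c_i$, $C(t)$ nonempty. Assume that for each $t\in[0,T]$ and $x\in C(t)$ the vectors $\{n_i:i\in J(t,x)\}$ are linearly independent, where $J(t,x)=\{i:(x,n_i)_0=c_i(t)\}$. Then for a solution $x$ of $-\dot x\in N^0_{C(t)}(x)$ on $[0,T]$ there exist integrable functions $\lambda_i:[0,T]\to[0,\infty)$, $i=1,\dots,k$, such that $-\dot x(t)=\sum_{i=1}^k\lambda_i(t)n_i$ for a.a. $t\in[0,T]$.
   Context: $N^0_K(x)=\{\zeta:(\zeta,c-x)_0\le0\ \forall c\in K\}$ if $x\in K$, $\emptyset$ otherwise. A solution is a Lipschitz function with $x(t)\in C(t)$ satisfying the inclusion a.e. *)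

theory Defs
  imports "HOL-Analysis.Analysis"
begin

definition normal_cone0 :: "'a::real_inner set \<Rightarrow> 'a \<Rightarrow> 'a set" where
  "normal_cone0 K x = (if x \<in> K then {\<zeta>. \<forall>c\<in>K. inner \<zeta> (c - x) \<le> 0} else {})"

definition polyC :: "nat \<Rightarrow> (nat \<Rightarrow> 'a::real_inner) \<Rightarrow> (nat \<Rightarrow> real \<Rightarrow> real) \<Rightarrow> real \<Rightarrow> 'a set" where
  "polyC k n c t = {x. \<forall>i\<in>{1..k}. inner x (n i) \<le> c i t}"

definition active_set :: "nat \<Rightarrow> (nat \<Rightarrow> 'a::real_inner) \<Rightarrow> (nat \<Rightarrow> real \<Rightarrow> real) \<Rightarrow> real \<Rightarrow> 'a \<Rightarrow> nat set" where
  "active_set k n c t x = {i\<in>{1..k}. inner x (n i) = c i t}"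

definition lin_indep_family :: "nat set \<Rightarrow> (nat \<Rightarrow> 'a::real_vector) \<Rightarrow> bool" where
  "lin_indep_family J n = (\<forall>u. (\<Sum>i\<in>J. u i *\<^sub>R n i) = 0 \<longrightarrow> (\<forall>i\<in>J. u i = 0))"

definition sweeping_solution :: "(real \<Rightarrow> 'a::real_inner set) \<Rightarrow> real \<Rightarrow> (real \<Rightarrow> 'a) \<Rightarrow> bool" where
  "sweeping_solution C T x =
     ((\<exists>L. L-lipschitz_on {0..T} x) \<and> (\<forall>t\<in>{0..T}. x t \<in> C t) \<and>
      (AE t in lebesgue. t \<in> {0..T} \<longrightarrow>
         x differentiable (at t) \<and> - vector_derivative x (at t) \<in> normal_cone0 (C t) (x t)))"

end

theory Submission
  imports Defs
begin


lemma lin_indep_inj: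
  fixes n :: "nat \<Rightarrow> 'a::real_vector"
  assumes "finite J" "lin_indep_family J n"
  shows "inj_on n J"
proof (rule inj_onI, rule ccontr)
  fix i j assume ij: "i \<in> J" "j \<in> J" "n i = n j" "i \<noteq> j"
  define u where "u = (\<lambda>l. if l = i then 1 else if l = j then -1 else (0::real))"
  have "(\<Sum>l\<in>J. u l *\<^sub>R n l) = (\<Sum>l\<in>J. (if l = i then n i else 0) + (if l = j then - n j else 0))"
    by (rule sum.cong) (auto simp: u_def ij)
  also have "\<dots> = n i - n j" using ij assms(1) by (simp add: sum.distrib)
  finally have "(\<Sum>l\<in>J. u l *\<^sub>R n l) = 0" using ij by simp
  then have "u i = 0" using assms(2) ij unfolding lin_indep_family_def by blast
  then show False by (simp add: u_def)
qed

lemma lin_indep_independent: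
  fixes n :: "nat \<Rightarrow> 'a::real_vector"
  assumes fin: "finite J" and li: "lin_indep_family J n"
  shows "independent (n ` J)"
proof
  assume "dependent (n ` J)"
  then obtain u where u: "\<exists>v\<in>n ` J. u v \<noteq> 0" "(\<Sum>v\<in>n ` J. u v *\<^sub>R v) = 0"
    using fin by (auto simp: real_vector.dependent_finite)
  have inj: "inj_on n J" by (rule lin_indep_inj[OF fin li])
  have "(\<Sum>l\<in>J. u (n l) *\<^sub>R n l) = 0" using u(2) by (simp add: sum.reindex[OF inj])
  then have "\<forall>l\<in>J. u (n l) = 0" using li unfolding lin_indep_family_def
    using li[unfolded lin_indep_family_def, rule_format, of "\<lambda>l. u (n l)"] by blast
  then show False using u(1) by auto
qed

lemma dual_vectors:
  fixes n :: "nat \<Rightarrow> 'a::euclidean_space"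
  assumes fin: "finite J" and li: "lin_indep_family J n"
  shows "\<exists>a. \<forall>i\<in>J. \<forall>j\<in>J. a i \<bullet> n j = (if i = j then 1 else 0)"
proof -
  have inj: "inj_on n J" by (rule lin_indep_inj[OF fin li])
  have ind: "independent (n ` J)" by (rule lin_indep_independent[OF fin li])
  have "\<forall>i\<in>J. \<exists>a. \<forall>j\<in>J. a \<bullet> n j = (if i = j then 1 else 0)"
  proof
    fix i assume i: "i \<in> J"
    obtain g :: "'a \<Rightarrow> real" where g: "linear g" "\<forall>w\<in>n ` J. g w = (if w = n i then 1 else 0)"
      using real_vector.linear_independent_extend[OF ind, of "\<lambda>w. if w = n i then 1 else 0"] by (elim exE conjE)
    define a where "a = (\<Sum>b\<in>Basis. g b *\<^sub>R b)"
    have ga: "g y = a \<bullet> y" for y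
    proof -
      have "g y \<bullet> 1 = (\<Sum>b\<in>Basis. y \<bullet> b * (g b \<bullet> 1))" by (rule Linear_Algebra.linear_componentwise[OF g(1)])
      then show ?thesis by (simp add: a_def inner_sum_right inner_commute mult.commute)
    qed
    show "\<exists>a. \<forall>j\<in>J. a \<bullet> n j = (if i = j then 1 else 0)"
    proof (intro exI ballI)
      fix j assume j: "j \<in> J"
      have "a \<bullet> n j = g (n j)" by (simp add: ga)
      also have "\<dots> = (if n j = n i then 1 else 0)" using g(2) j by auto
      also have "\<dots> = (if i = j then 1 else 0)" using inj i j by (auto dest: inj_onD)
      finally show "a \<bullet> n j = (if i = j then 1 else 0)" .
    qed
  qed
  then show ?thesis by (rule bchoice)
qed

lemma cone_rep:
  fixes n :: "nat \<Rightarrow> 'a::euclidean_space"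
  assumes y: "y \<in> polyC k n c t" and J: "J = active_set k n c t y"
    and v: "v \<in> normal_cone0 (polyC k n c t) y"
    and a: "\<forall>i\<in>J. \<forall>j\<in>J. a i \<bullet> n j = (if i = j then 1 else 0)"
  shows "v = (\<Sum>i\<in>J. (a i \<bullet> v) *\<^sub>R n i)" "\<forall>i\<in>J. 0 \<le> a i \<bullet> v"
proof -
  have finJ: "finite J" unfolding J active_set_def by simp
  have vc: "\<forall>z\<in>polyC k n c t. v \<bullet> (z - y) \<le> 0" using v y by (simp add: normal_cone0_def)
  have K: "v \<bullet> d \<le> 0" if d: "\<forall>j\<in>J. d \<bullet> n j \<le> 0" for d
  proof -
    define I' where "I' = {1..k} - J"
    have slack: "0 < c i t - y \<bullet> n i" if "i \<in> I'" for i
      using that y unfolding I'_def J active_set_def polyC_def by force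
    have "\<forall>i\<in>I'. \<forall>\<^sub>F e in at_right 0. e * (d \<bullet> n i) < c i t - y \<bullet> n i"
    proof
      fix i assume "i \<in> I'"
      have "((\<lambda>e. e * (d \<bullet> n i)) \<longlongrightarrow> 0 * (d \<bullet> n i)) (at_right (0::real))"
        by (intro tendsto_intros)
      then show "\<forall>\<^sub>F e in at_right 0. e * (d \<bullet> n i) < c i t - y \<bullet> n i"
        using order_tendstoD(2)[OF _ slack[OF \<open>i \<in> I'\<close>]] by simp
    qed
    then have ev: "\<forall>\<^sub>F e in at_right 0. \<forall>i\<in>I'. e * (d \<bullet> n i) < c i t - y \<bullet> n i"
      by (rule eventually_ball_finite[rotated]) (simp add: I'_def)
    obtain e :: real where e: "0 < e" "\<forall>i\<in>I'. e * (d \<bullet> n i) < c i t - y \<bullet> n i"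
      using eventually_happens'[OF trivial_limit_at_right_real eventually_conj[OF ev eventually_at_right_less]]
      by blast
    have "y + e *\<^sub>R d \<in> polyC k n c t"
      unfolding polyC_def
    proof (intro CollectI ballI)
      fix i assume i: "i \<in> {1..k}"
      show "(y + e *\<^sub>R d) \<bullet> n i \<le> c i t"
      proof (cases "i \<in> J")
        case True
        then have "y \<bullet> n i = c i t" unfolding J active_set_def by simp
        moreover have "e * (d \<bullet> n i) \<le> 0" using d True e(1) by (simp add: mult_nonneg_nonpos)
        ultimately show ?thesis by (simp add: inner_add_left)
      next
        case False
        then have "i \<in> I'" using i by (simp add: I'_def)
        then show ?thesis using e(2) by (fastforce simp: inner_add_left)
      qed
    qed
    then have "v \<bullet> (e *\<^sub>R d) \<le> 0" using vc by fastforce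
    then have "e * (v \<bullet> d) \<le> 0" by simp
    then show ?thesis using e(1) by (simp add: mult_le_0_iff)
  qed
  obtain p q where pq: "p \<in> span (n ` J)" "\<And>w. w \<in> span (n ` J) \<Longrightarrow> orthogonal q w" "v = p + q"
    using orthogonal_subspace_decomp_exists[of "n ` J" v] by blast
  have qn: "q \<bullet> n j = 0" if "j \<in> J" for j
    using pq(2)[of "n j"] that by (simp add: orthogonal_def span_base)
  have "v \<bullet> q \<le> 0" by (rule K) (simp add: qn)
  moreover have "v \<bullet> (- q) \<le> 0" by (rule K) (simp add: qn)
  ultimately have "v \<bullet> q = 0" by simp
  moreover have "p \<bullet> q = 0" using pq(2)[OF pq(1)] by (simp add: orthogonal_def inner_commute)
  ultimately have "q \<bullet> q = 0" using pq(3) by (simp add: inner_add_left)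
  then have "q = 0" by simp
  then have vspan: "v \<in> span (n ` J)" using pq by simp
  define g where "g = (\<lambda>w. (\<Sum>i\<in>J. (a i \<bullet> w) *\<^sub>R n i))"
  have lg: "linear g" unfolding g_def
    by (rule linearI) (simp_all add: inner_add_right scaleR_add_left sum.distrib scaleR_sum_right)
  have "id v = g v"
  proof (rule real_vector.linear_eq_on_span[OF linear_id lg _ vspan])
    fix w assume "w \<in> n ` J"
    then obtain j where j: "j \<in> J" "w = n j" by blast
    have "g w = (\<Sum>i\<in>J. (if i = j then n i else 0))"
      unfolding g_def j(2) by (rule sum.cong) (use a j in auto)
    also have "\<dots> = n j" using finJ j by simp
    finally show "id w = g w" using j by simp
  qed
  then show "v = (\<Sum>i\<in>J. (a i \<bullet> v) *\<^sub>R n i)" by (simp add: g_def)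
  show "\<forall>i\<in>J. 0 \<le> a i \<bullet> v"
  proof
    fix i assume i: "i \<in> J"
    have "v \<bullet> (- a i) \<le> 0" by (rule K) (use a i in \<open>auto simp: inner_commute\<close>)
    then show "0 \<le> a i \<bullet> v" by (simp add: inner_commute)
  qed
qed



lemma deriv_seq:
  fixes x :: "real \<Rightarrow> 'a::euclidean_space"
  assumes L: "L-lipschitz_on {0..T} x" and t: "0 < t" "t < T" and dx: "x differentiable (at t)"
  shows "(\<lambda>m. real m *\<^sub>R (x (max 0 (min T (t + 1/real m))) - x (max 0 (min T t))))
           \<longlonglongrightarrow> vector_derivative x (at t)" (is ?A)
    and "norm (vector_derivative x (at t)) \<le> L" (is ?B)
proof -
  define x' where "x' = vector_derivative x (at t)"
  define f where "f = (\<lambda>m. real m *\<^sub>R (x (max 0 (min T (t + 1/real m))) - x (max 0 (min T t))))"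
  define h where "h = (\<lambda>m. inverse (real (Suc m)))"
  have hd: "(x has_vector_derivative x') (at t)" using dx unfolding x'_def
    by (simp add: vector_derivative_works[symmetric])
  then have "(x has_derivative (\<lambda>h. h *\<^sub>R x')) (at t)" by (simp add: has_vector_derivative_def)
  then have lim0: "((\<lambda>h. norm (x (t + h) - x t - h *\<^sub>R x') / norm h) \<longlongrightarrow> 0) (at 0)"
    by (simp add: has_derivative_at)
  have h0: "h \<longlonglongrightarrow> 0" unfolding h_def by (rule LIMSEQ_inverse_real_of_nat)
  have hs: "filterlim h (at 0) sequentially"
    unfolding filterlim_at using h0 by (simp add: h_def)
  have lim1: "(\<lambda>m. norm (x (t + h m) - x t - h m *\<^sub>R x') / norm (h m)) \<longlonglongrightarrow> 0"
    by (rule filterlim_compose[OF lim0 hs])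
  have evT: "\<forall>\<^sub>F m in sequentially. h m < T - t"
    using order_tendstoD(2)[OF h0] t by simp
  have hpos: "0 < h m" for m by (simp add: h_def)
  have fS: "\<forall>\<^sub>F m in sequentially. f (Suc m) = real (Suc m) *\<^sub>R (x (t + h m) - x t)"
    using evT
  proof (rule eventually_mono)
    fix m assume "h m < T - t"
    then have "max 0 (min T (t + h m)) = t + h m" "max 0 (min T t) = t"
      using hpos[of m] t by auto
    moreover have "1 / real (Suc m) = h m" by (simp add: h_def divide_inverse)
    ultimately show "f (Suc m) = real (Suc m) *\<^sub>R (x (t + h m) - x t)"
      unfolding f_def by (metis of_nat_Suc)
  qed
  have eqn: "norm (real (Suc m) *\<^sub>R (x (t + h m) - x t) - x') =
     norm (x (t + h m) - x t - h m *\<^sub>R x') / norm (h m)" for m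
  proof -
    have "real (Suc m) *\<^sub>R (x (t + h m) - x t) - x' = real (Suc m) *\<^sub>R (x (t + h m) - x t - h m *\<^sub>R x')"
      by (simp add: h_def scaleR_diff_right del: of_nat_Suc)
    then show ?thesis by (simp add: h_def divide_inverse del: of_nat_Suc)
  qed
  have "(\<lambda>m. f (Suc m) - x') \<longlonglongrightarrow> 0"
  proof (rule tendsto_norm_zero_cancel)
    have "\<forall>\<^sub>F m in sequentially. norm (x (t + h m) - x t - h m *\<^sub>R x') / norm (h m) = norm (f (Suc m) - x')"
      using fS by (rule eventually_mono) (metis eqn)
    then show "(\<lambda>m. norm (f (Suc m) - x')) \<longlonglongrightarrow> 0"
      by (rule Lim_transform_eventually[OF lim1])
  qed
  then have fx: "(\<lambda>m. f (Suc m)) \<longlonglongrightarrow> x'"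
    using Lim_null by blast
  then show ?A unfolding f_def[symmetric] x'_def[symmetric] using LIMSEQ_imp_Suc[OF fx] by (simp add: f_def)
  have "\<forall>\<^sub>F m in sequentially. norm (f (Suc m)) \<le> L"
    using eventually_conj[OF fS evT]
  proof (rule eventually_mono)
    fix m assume m: "f (Suc m) = real (Suc m) *\<^sub>R (x (t + h m) - x t) \<and> h m < T - t"
    have "dist (x (t + h m)) (x t) \<le> L * dist (t + h m) t"
      by (rule lipschitz_onD[OF L]) (use m hpos[of m] t in auto)
    then have "norm (x (t + h m) - x t) \<le> L * h m"
      using hpos[of m] by (simp add: dist_norm)
    then have "real (Suc m) * norm (x (t + h m) - x t) \<le> real (Suc m) * (L * h m)"
      by (rule mult_left_mono) simp
    also have "\<dots> = L" by (simp add: h_def del: of_nat_Suc)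
    finally show "norm (f (Suc m)) \<le> L" using m by simp
  qed
  then show ?B unfolding x'_def[symmetric]
    by (rule Lim_norm_ubound[OF trivial_limit_sequentially fx, rotated])
qed



lemma meas_cases:
  fixes F :: "'s \<Rightarrow> 'b \<Rightarrow> real"
  assumes S: "finite S" and G: "\<And>t. G t \<in> S" and sp: "space M = UNIV"
    and Gs: "\<And>s. s \<in> S \<Longrightarrow> {t. G t = s} \<in> sets M"
    and Fm: "\<And>s. s \<in> S \<Longrightarrow> F s \<in> borel_measurable M"
  shows "(\<lambda>t. F (G t) t) \<in> borel_measurable M"
proof -
  have eq: "(\<lambda>t. F (G t) t) = (\<lambda>t. \<Sum>s\<in>S. indicator {t. G t = s} t * F s t)"
  proof
    fix t
    have "(\<Sum>s\<in>S. indicator {t. G t = s} t * F s t) = (\<Sum>s\<in>S. if G t = s then F s t else 0)"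
      by (rule sum.cong) (auto simp: indicator_def)
    also have "\<dots> = F (G t) t" using S G[of t] by (simp add: sum.delta)
    finally show "F (G t) t = (\<Sum>s\<in>S. indicator {t. G t = s} t * F s t)" by simp
  qed
  show ?thesis unfolding eq
    by (intro borel_measurable_sum borel_measurable_times borel_measurable_indicator Gs Fm)
qed

theorem lemma6:
  fixes k :: nat and n :: "nat \<Rightarrow> 'a::euclidean_space" and c :: "nat \<Rightarrow> real \<Rightarrow> real"
    and T :: real and x :: "real \<Rightarrow> 'a"
  assumes lip: "\<forall>i\<in>{1..k}. \<exists>L. L-lipschitz_on {0..T} (c i)"
    and nonempty: "\<forall>t\<in>{0..T}. polyC k n c t \<noteq> {}"
    and licq: "\<forall>t\<in>{0..T}. \<forall>y\<in>polyC k n c t. lin_indep_family (active_set k n c t y) n"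
    and sol: "sweeping_solution (polyC k n c) T x"
  shows "\<exists>lam :: nat \<Rightarrow> real \<Rightarrow> real.
           (\<forall>i\<in>{1..k}. set_integrable lebesgue {0..T} (lam i) \<and> (\<forall>t\<in>{0..T}. 0 \<le> lam i t)) \<and>
           (AE t in lebesgue. t \<in> {0..T} \<longrightarrow>
              - vector_derivative x (at t) = (\<Sum>i=1..k. lam i t *\<^sub>R n i))"
proof (cases "T < 0")
  case True
  then have e: "{0..T} = {}" by simp
  show ?thesis
    by (rule exI[of _ "\<lambda>i t. 0"]) (simp add: e)
next
  case False
  then have T0: "0 \<le> T" by simp
  obtain L where L: "L-lipschitz_on {0..T} x" using sol unfolding sweeping_solution_def by blast
  have L0: "0 \<le> L" using lipschitz_on_nonneg[OF L] .
  have xin: "\<forall>t\<in>{0..T}. x t \<in> polyC k n c t" using sol unfolding sweeping_solution_def by blast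
  have ae: "AE t in lebesgue. t \<in> {0..T} \<longrightarrow>
         x differentiable (at t) \<and> - vector_derivative x (at t) \<in> normal_cone0 (polyC k n c t) (x t)"
    using sol unfolding sweeping_solution_def by blast
  define I where "I = {1..k}"
  have finI: "finite I" by (simp add: I_def)
  define cl where "cl = (\<lambda>t::real. max 0 (min T t))"
  have clin: "cl t \<in> {0..T}" for t using T0 by (auto simp: cl_def)
  have clin2: "0 \<le> cl t" "cl t \<le> T" for t using clin[of t] by auto
  have clid: "t \<in> {0..T} \<Longrightarrow> cl t = t" for t by (auto simp: cl_def)
  have contcl: "continuous_on UNIV cl" unfolding cl_def by (intro continuous_intros)
  have contx: "continuous_on {0..T} x" by (rule lipschitz_on_continuous_on[OF L])
  have cxa: "continuous_on UNIV (\<lambda>t. x (cl (t + a)))" for a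
  proof (rule continuous_on_compose2[OF contx, of UNIV "\<lambda>t. cl (t + a)"])
    show "continuous_on UNIV (\<lambda>t. cl (t + a))"
      by (rule continuous_on_compose2[OF contcl]) (auto intro!: continuous_intros)
  qed (auto simp: clin2)
  have cx: "continuous_on UNIV (\<lambda>t. x (cl t))" using cxa[of 0] by simp
  define cc where "cc = (\<lambda>i t. if i \<in> I then c i (cl t) else 0)"
  have ccont: "continuous_on UNIV (cc i)" for i
  proof (cases "i \<in> I")
    case True
    then obtain Li where "Li-lipschitz_on {0..T} (c i)" using lip True unfolding I_def by blast
    then have "continuous_on {0..T} (c i)" by (rule lipschitz_on_continuous_on)
    then have "continuous_on UNIV (\<lambda>t. c i (cl t))"
      by (rule continuous_on_compose2[OF _ contcl]) (auto simp: clin2)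
    then show ?thesis using True by (simp add: cc_def)
  next
    case False
    then show ?thesis by (simp add: cc_def)
  qed
  define g where "g = (\<lambda>i t. x (cl t) \<bullet> n i - cc i t)"
  have gm[measurable]: "g i \<in> borel_measurable borel" for i
    unfolding g_def
    by (intro borel_measurable_continuous_onI continuous_intros continuous_on_inner cx ccont)
  define Jt where "Jt = (\<lambda>t. {i\<in>I. g i t = 0})"
  have JtA: "Jt t = active_set k n c t (x t)" if "t \<in> {0..T}" for t
    using that by (auto simp: Jt_def g_def cc_def clid active_set_def I_def)
  have JtI: "Jt t \<in> Pow I" for t by (auto simp: Jt_def)
  have Jset: "{t. Jt t = J} \<in> sets borel" if "J \<in> Pow I" for J
  proof -
    have "{t. Jt t = J} = {t. \<forall>i\<in>I. (i \<in> J) = (g i t = 0)}"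
      using that by (auto simp: Jt_def)
    also have "\<dots> \<in> sets borel" by measurable
    finally show ?thesis .
  qed
  define aJ where "aJ = (\<lambda>J. SOME a. \<forall>i\<in>J. \<forall>j\<in>J. a i \<bullet> n j = (if i = j then 1 else (0::real)))"
  have aJ: "\<forall>i\<in>J. \<forall>j\<in>J. aJ J i \<bullet> n j = (if i = j then 1 else 0)"
    if "J \<subseteq> I" "lin_indep_family J n" for J
  proof -
    have "finite J" using that finI finite_subset by blast
    from someI_ex[OF dual_vectors[OF this that(2)]] show ?thesis by (simp add: aJ_def)
  qed
  define D where "D = (\<lambda>t. lim (\<lambda>m. real m *\<^sub>R (x (cl (t + 1/real m)) - x (cl t))))"
  have Dm[measurable]: "D \<in> borel_measurable borel"
    unfolding D_def
  proof (rule borel_measurable_lim_metric)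
    fix m :: nat
    show "(\<lambda>t. real m *\<^sub>R (x (cl (t + 1 / real m)) - x (cl t))) \<in> borel_measurable borel"
      by (intro borel_measurable_continuous_onI continuous_intros cx cxa)
  qed
  define B where "B = L * (\<Sum>J\<in>Pow I. \<Sum>i\<in>I. norm (aJ J i))"
  have B0: "0 \<le> B" unfolding B_def using L0 by (intro mult_nonneg_nonneg sum_nonneg) auto
  define F where "F = (\<lambda>i J t. if t \<in> {0..T} \<and> i \<in> J then max 0 (min B (aJ J i \<bullet> (- D t))) else 0)"
  define lam where "lam = (\<lambda>i t. F i (Jt t) t)"
  have lamm: "lam i \<in> borel_measurable lebesgue" for i
  proof -
    have "lam i \<in> borel_measurable borel"
      unfolding lam_def
    proof (rule meas_cases[OF _ JtI])
      show "finite (Pow I)" using finI by simp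
      show "{t. Jt t = J} \<in> sets borel" if "J \<in> Pow I" for J using Jset[OF that] .
      show "F i J \<in> borel_measurable borel" for J unfolding F_def by measurable
    qed simp
    then have "lam i \<in> borel_measurable lborel" by simp
    then show ?thesis by (rule measurable_completion)
  qed
  have lamB: "\<bar>lam i t\<bar> \<le> B" for i t using B0 by (auto simp: lam_def F_def)
  have lam0: "0 \<le> lam i t" for i t by (auto simp: lam_def F_def)
  have int: "set_integrable lebesgue {0..T} (lam i)" for i
  proof -
    have "lam i absolutely_integrable_on {0..T}"
    proof (rule measurable_bounded_by_integrable_imp_absolutely_integrable)
      show "lam i \<in> borel_measurable (lebesgue_on {0..T})"
        by (rule measurable_restrict_space1[OF lamm])
      show "(\<lambda>_. B) integrable_on {0..T}" by (rule integrable_on_const) simp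
    qed (use lamB in auto)
    then show ?thesis by simp
  qed
  have AE0: "AE t in lebesgue. t \<noteq> 0 \<and> t \<noteq> T"
    unfolding eventually_ae_filter_negligible
    by (rule exI[of _ "{0, T}"]) auto
  have main: "- vector_derivative x (at t) = (\<Sum>i=1..k. lam i t *\<^sub>R n i)"
    if t: "0 < t" "t < T" and dx: "x differentiable (at t)"
      and cone: "- vector_derivative x (at t) \<in> normal_cone0 (polyC k n c t) (x t)" for t
  proof -
    have tT: "t \<in> {0..T}" using t by simp
    define v where "v = - vector_derivative x (at t)"
    have "D t = vector_derivative x (at t)"
      unfolding D_def cl_def by (rule limI[OF deriv_seq(1)[OF L t dx]])
    then have Dv: "- D t = v" by (simp add: v_def)
    have nv: "norm v \<le> L" using deriv_seq(2)[OF L t dx] by (simp add: v_def)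
    define J where "J = Jt t"
    have JA: "J = active_set k n c t (x t)" using JtA[OF tT] by (simp add: J_def)
    have JI: "J \<subseteq> I" using JtI[of t] by (simp add: J_def)
    have xt: "x t \<in> polyC k n c t" using xin tT by blast
    have li: "lin_indep_family J n" using licq tT xt JA by blast
    have a: "\<forall>i\<in>J. \<forall>j\<in>J. aJ J i \<bullet> n j = (if i = j then 1 else 0)" by (rule aJ[OF JI li])
    have rep: "v = (\<Sum>i\<in>J. (aJ J i \<bullet> v) *\<^sub>R n i)" "\<forall>i\<in>J. 0 \<le> aJ J i \<bullet> v"
      using cone_rep[OF xt JA _ a, of v] cone unfolding v_def by blast+
    have lamJ: "lam i t = aJ J i \<bullet> v" if i: "i \<in> J" for i
    proof -
      have "aJ J i \<bullet> v \<le> norm (aJ J i) * norm v" by (rule norm_cauchy_schwarz)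
      also have "\<dots> \<le> norm (aJ J i) * L" using nv by (simp add: mult_left_mono)
      also have "\<dots> \<le> B"
      proof -
        have "norm (aJ J i) \<le> (\<Sum>i'\<in>I. norm (aJ J i'))"
          using i JI finI by (intro member_le_sum) auto
        also have "\<dots> \<le> (\<Sum>J'\<in>Pow I. \<Sum>i'\<in>I. norm (aJ J' i'))"
          using JI finI by (intro member_le_sum[where f="\<lambda>J'. \<Sum>i'\<in>I. norm (aJ J' i')"] sum_nonneg) auto
        finally show ?thesis unfolding B_def using L0 by (simp add: mult.commute mult_left_mono)
      qed
      finally have "aJ J i \<bullet> v \<le> B" .
      then show ?thesis using rep(2) i tT
        by (simp add: lam_def F_def J_def[symmetric] Dv)
    qed
    have "(\<Sum>i=1..k. lam i t *\<^sub>R n i) = (\<Sum>i\<in>J. lam i t *\<^sub>R n i)"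
      unfolding I_def[symmetric]
    proof (rule sum.mono_neutral_right[OF finI JI])
      show "\<forall>i\<in>I - J. lam i t *\<^sub>R n i = 0"
        by (auto simp: lam_def F_def J_def)
    qed
    also have "\<dots> = (\<Sum>i\<in>J. (aJ J i \<bullet> v) *\<^sub>R n i)" by (rule sum.cong) (auto simp: lamJ)
    also have "\<dots> = v" using rep(1) by simp
    finally show ?thesis by (simp add: v_def)
  qed
  show ?thesis
  proof (intro exI conjI ballI)
    fix i show "set_integrable lebesgue {0..T} (lam i)" by (rule int)
    fix t show "0 \<le> lam i t" by (rule lam0)
  next
    show "AE t in lebesgue. t \<in> {0..T} \<longrightarrow> - vector_derivative x (at t) = (\<Sum>i = 1..k. lam i t *\<^sub>R n i)"
      using ae AE0
    proof eventually_elim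
      case (elim t)
      show ?case
      proof
        assume "t \<in> {0..T}"
        then have "0 < t" "t < T" using elim(2) by auto
        then show "- vector_derivative x (at t) = (\<Sum>i = 1..k. lam i t *\<^sub>R n i)"
          using elim(1) \<open>t \<in> {0..T}\<close> main by blast
      qed
    qed
  qed
qed

end
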